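(* Let $N,w,h$ be positive integers with $N/h\leq w\leq N-h+1$, and let $$f_N(w,h)=\max\Big\{\sum_{l=1}^{|\Lambda|}N_l^2\ :\ \Lambda \text{ a partition of }\{1,\dots,N\}\text{ with }\max\Lambda\leq w,\ |\Lambda|\geq h\Big\}.$$ Then $f_N(w,h)\leq w(N-h)+N$.
   Context: A partition $\Lambda=\{A_1,\dots,A_{|\Lambda|}\}$ of $\{1,\dots,N\}$ is a collection of nonempty pairwise disjoint subsets whose union is $\{1,\dots,N\}$; $|\Lambda|$ is the number of subsets, $N_l=|A_l|$, and $\max\Lambda=\max_lN_l$. *)

theory Defs
  imports Complex_Main "HOL-Library.Disjoint_Sets"
begin

definition max_block :: "nat set set \<Rightarrow> nat" where
  "max_block \<Lambda> = Max (card ` \<Lambda>)"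

definition fN :: "nat \<Rightarrow> nat \<Rightarrow> nat \<Rightarrow> nat" where
  "fN N w h = Max {(\<Sum>A\<in>\<Lambda>. (card A)^2) | \<Lambda>.
      partition_on {1..N} \<Lambda> \<and> max_block \<Lambda> \<le> w \<and> card \<Lambda> \<ge> h}"

end

theory Submission
  imports Defs
begin

lemma part_bound:
  fixes N w h :: nat
  assumes P: "partition_on {1..N} P" and mb: "max_block P \<le> w" and hP: "card P \<ge> h"
  shows "int (\<Sum>A\<in>P. (card A)^2) \<le> int w * (int N - int h) + int N"
proof -
  have finP: "finite P" using finite_elements[OF _ P] by simp
  have U: "\<Union>P = {1..N}" using partition_onD1[OF P] by simp
  have finA: "\<And>A. A \<in> P \<Longrightarrow> finite A" using U
    by (metis Union_upper finite_atLeastAtMost finite_subset)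
  have ne: "\<And>A. A \<in> P \<Longrightarrow> A \<noteq> {}" using partition_onD3[OF P] by auto
  have c1: "\<And>A. A \<in> P \<Longrightarrow> card A \<ge> 1" using finA ne
    by (simp add: Suc_leI card_gt_0_iff)
  have cw: "\<And>A. A \<in> P \<Longrightarrow> card A \<le> w"
  proof -
    fix A assume "A \<in> P"
    then have "card A \<le> max_block P" unfolding max_block_def
      using finP by (simp add: Max_ge)
    then show "card A \<le> w" using mb by simp
  qed
  have sumN: "(\<Sum>A\<in>P. card A) = N"
    using card_Union_disjoint[OF partition_onD2[OF P] finA] U by simp
  have each: "\<And>A. A \<in> P \<Longrightarrow> int ((card A)^2) \<le> int (card A) + int w * (int (card A) - 1)"
  proof -
    fix A assume a: "A \<in> P"
    define c where "c = int (card A)"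
    have "c \<ge> 1" "c \<le> int w" using c1[OF a] cw[OF a] by (auto simp: c_def)
    then have "c * (c - 1) \<le> int w * (c - 1)" by (intro mult_right_mono) auto
    then show "int ((card A)^2) \<le> int (card A) + int w * (int (card A) - 1)"
      by (simp add: c_def power2_eq_square algebra_simps)
  qed
  have "int (\<Sum>A\<in>P. (card A)^2) = (\<Sum>A\<in>P. int ((card A)^2))" by simp
  also have "\<dots> \<le> (\<Sum>A\<in>P. int (card A) + int w * (int (card A) - 1))"
    by (rule sum_mono) (rule each)
  also have "\<dots> = int N + int w * (int N - int (card P))"
    using sumN by (simp add: sum.distrib sum_distrib_left[symmetric] sum_subtractf of_nat_sum[symmetric])
  also have "\<dots> \<le> int w * (int N - int h) + int N"
    proof -
    have "int w * int h \<le> int w * int (card P)" using hP by (intro mult_left_mono) auto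
    then show ?thesis by (simp add: right_diff_distrib)
  qed
  finally show ?thesis .
qed

theorem lemma2:
  fixes N w h :: nat
  assumes "N > 0" "w > 0" "h > 0"
    and "real N / real h \<le> real w" "int w \<le> int N - int h + 1"
  shows "int (fN N w h) \<le> int w * (int N - int h) + int N"
proof -
  define S where "S = {(\<Sum>A\<in>\<Lambda>. (card A)^2) | \<Lambda>.
      partition_on {1..N} \<Lambda> \<and> max_block \<Lambda> \<le> w \<and> card \<Lambda> \<ge> h}"
  have hN: "h \<le> N" using assms by linarith
  have fin: "finite S"
  proof -
    have "S \<subseteq> (\<lambda>\<Lambda>. \<Sum>A\<in>\<Lambda>. (card A)^2) ` {P. partition_on {1..N} P}"
      unfolding S_def by auto
    then show ?thesis using finitely_many_partition_on[of "{1..N}"]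
      by (meson finite_atLeastAtMost finite_imageI finite_subset)
  qed
  define Q where "Q = (\<lambda>x. {x}) ` {1..N}"
  have Qp: "partition_on {1..N} Q" unfolding Q_def by (rule partition_on_singletons)
  have Qc: "card Q = N" unfolding Q_def by (simp add: card_image)
  have Qm: "max_block Q \<le> w" unfolding max_block_def Q_def
    using assms(1,3) \<open>h \<le> N\<close> assms(2)
    by (simp add: image_image Suc_leI)
  have ne: "S \<noteq> {}" unfolding S_def using Qp Qc Qm hN by blast
  have all: "\<forall>s\<in>S. int s \<le> int w * (int N - int h) + int N"
    unfolding S_def using part_bound by blast
  have "fN N w h \<in> S" unfolding fN_def S_def[symmetric] using fin ne by simp
  then show ?thesis using all by blast
qed

end
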